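(* Let $l\subset[0,1]$ be a compact set and let $f:[0,\infty)\to[0,\infty)$ be a function such that for every $a\in l$, \[ \#\big(W(l,a)\cap[1,N]\big)=o_a(f(N))\quad\text{as }N\to\infty . \] Let $g(x)=\exp\big(-f(1-\log x/\log 2)\big)$ for $x\in(0,1)$, $g(0)=0$. Then $\mathcal{H}^g(l)<\infty$. In particular, if $f(N)=N^{\sigma}$ with $\sigma\in(0,1)$ one may take $g(x)=\exp(-(-\log x)^{\sigma})$, and if $\#(W(l,a)\cap[1,N])=o_a(N)$ for all $a\in l$ then $\dim_{\mathrm H} l=0$.
   Context: For a compact set $l\subset\mathbb{R}$ let $W(l)=\{k\in\mathbb{N}: l\cap([2^{-k-1},2^{-k}]\cup[-2^{-k},-2^{-k-1}])\neq\emptyset\}$, and for $a\in l$ let $W(l,a)=W(l-a)$. For a gauge function $g$, $\mathcal{H}^g(F)=\lim_{\delta\to0}\inf\{\sum_i g(\operatorname{diam}U_i): F\subset\bigcup_iU_i,\ \operatorname{diam}U_i<\delta\}$. *)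

theory Defs
  imports "HOL-Analysis.Analysis" "HOL-Library.Landau_Symbols"
begin

definition W :: "real set \<Rightarrow> nat set" where
  "W l = {k. l \<inter> ({(1/2)^(k+1) .. (1/2)^k} \<union> {-((1/2)^k) .. -((1/2)^(k+1))}) \<noteq> {}}"

definition W_at :: "real set \<Rightarrow> real \<Rightarrow> nat set" where
  "W_at l a = W ((\<lambda>x. x - a) ` l)"

text \<open>Generalized Hausdorff measure with gauge g:
  limit as delta \<rightarrow> 0 (= supremum over delta > 0, the infima being monotone)
  of the infimum over countable covers by bounded sets of diameter < delta.\<close>
definition hausdorff_gauge :: "(real \<Rightarrow> real) \<Rightarrow> real set \<Rightarrow> ennreal" where
  "hausdorff_gauge g F =
     (SUP \<delta>\<in>{0<..}. INF U\<in>{U :: nat \<Rightarrow> real set. F \<subseteq> (\<Union>i. U i) \<and>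
            (\<forall>i. bounded (U i) \<and> diameter (U i) < \<delta>)}.
        (\<Sum>i. ennreal (g (diameter (U i)))))"

definition hausdorff_dim :: "real set \<Rightarrow> real" where
  "hausdorff_dim F = Inf {s. s \<ge> 0 \<and> hausdorff_gauge (\<lambda>x. x powr s) F = 0}"

end

theory Submission imports Defs "HOL-Real_Asymp.Real_Asymp" begin

definition SC :: "real set \<Rightarrow> real \<Rightarrow> nat set" where
  "SC P p = {k. \<exists>q\<in>P. q \<noteq> p \<and> (1/2)^(k+1) \<le> \<bar>q - p\<bar> \<and> \<bar>q - p\<bar> \<le> (1/2::real)^k}"

lemma scale_exists:
  fixes d :: real assumes "0 < d" "d \<le> 1"
  shows "\<exists>k. (1/2)^(k+1) \<le> d \<and> d \<le> (1/2::real)^k"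
proof -
  obtain n where n: "(1/2::real)^n < d"
    using real_arch_pow_inv[of d "1/2"] assms by auto
  define k where "k = (LEAST k. (1/2::real)^(k+1) \<le> d)"
  have ex: "(1/2::real)^(n+1) \<le> d"
  proof -
    have "(1/2::real)^(n+1) \<le> (1/2)^n" by (simp add: power_decreasing)
    thus ?thesis using n by linarith
  qed
  have k1: "(1/2::real)^(k+1) \<le> d" unfolding k_def by (rule LeastI[where P="\<lambda>k. (1/2::real)^(k+1) \<le> d", OF ex])
  have k2: "d \<le> (1/2)^k"
  proof (cases k)
    case 0 thus ?thesis using assms by simp
  next
    case (Suc j)
    have "\<not> (1/2::real)^(j+1) \<le> d"
    proof
      assume "(1/2::real)^(j+1) \<le> d"
      hence "k \<le> j" unfolding k_def by (rule Least_le)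
      thus False using Suc by simp
    qed
    thus ?thesis using Suc by simp
  qed
  show ?thesis using k1 k2 by blast
qed

lemma abs01: "x \<in> S \<Longrightarrow> y \<in> S \<Longrightarrow> S \<subseteq> {0..1} \<Longrightarrow> \<bar>x - y\<bar> \<le> (1::real)"
  by (auto simp: subset_iff abs_if) (metis atLeastAtMost_iff diff_le_eq add_increasing2 diff_ge_0_iff_ge)+

lemma SC_mono: "A \<subseteq> P \<Longrightarrow> SC A p \<subseteq> SC P p"
  unfolding SC_def by blast

lemma count_lemma:
  "\<forall>P. finite P \<longrightarrow> P \<subseteq> {0..1} \<longrightarrow> (\<forall>p\<in>P. finite (SC P p) \<and> card (SC P p) \<le> m)
       \<longrightarrow> card P \<le> 5^m"
proof (induction m)
  case 0
  show ?case
  proof (intro allI impI)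
    fix P :: "real set"
    assume fin: "finite P" and sub: "P \<subseteq> {0..1}" and h: "\<forall>p\<in>P. finite (SC P p) \<and> card (SC P p) \<le> 0"
    have "card P \<le> 1"
    proof (rule ccontr)
      assume "\<not> card P \<le> 1"
      then have "\<exists>p\<in>P. \<exists>q\<in>P. p \<noteq> q" using fin by (auto simp: card_le_Suc0_iff_eq)
      then obtain p q where pq: "p \<in> P" "q \<in> P" "p \<noteq> q" by blast
      have "0 < \<bar>q - p\<bar>" "\<bar>q - p\<bar> \<le> 1" using pq sub abs01[of q P p] by auto
      then obtain k where "(1/2)^(k+1) \<le> \<bar>q - p\<bar> \<and> \<bar>q - p\<bar> \<le> (1/2::real)^k"
        using scale_exists by blast
      hence "k \<in> SC P p" unfolding SC_def using pq by force
      thus False using h pq(1) by (metis card_0_eq empty_iff le_zero_eq)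
    qed
    thus "card P \<le> 5^0" by simp
  qed
next
  case (Suc m)
  show ?case
  proof (intro allI impI)
    fix P :: "real set"
    assume fin: "finite P" and sub: "P \<subseteq> {0..1}" and h: "\<forall>p\<in>P. finite (SC P p) \<and> card (SC P p) \<le> Suc m"
    show "card P \<le> 5 ^ Suc m"
    proof (cases "card P \<le> 1")
      case True thus ?thesis by (metis le_trans one_le_numeral one_le_power)
    next
      case False
      hence ne: "P \<noteq> {}" by auto
      define a where "a = Min P"
      define b where "b = Max P"
      define D where "D = b - a"
      have aP: "a \<in> P" and bP: "b \<in> P" using fin ne a_def b_def by auto
      have ab: "\<forall>p\<in>P. a \<le> p \<and> p \<le> b" using fin a_def b_def by auto
      have "\<exists>p\<in>P. \<exists>q\<in>P. p \<noteq> q" using fin False by (auto simp: card_le_Suc0_iff_eq)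
      then obtain p q where pq: "p \<in> P" "q \<in> P" "p \<noteq> q" by blast
      have Dpos: "0 < D"
      proof -
        have "a \<le> p" "p \<le> b" "a \<le> q" "q \<le> b" using ab pq by auto
        thus ?thesis using pq(3) D_def by linarith
      qed
      define A where "A = (\<lambda>i::nat. {p\<in>P. a + real i * D / 5 \<le> p \<and> p \<le> a + (real i + 1) * D / 5})"
      have cover: "P = (\<Union>i<5. A i)"
      proof
        show "P \<subseteq> (\<Union>i<5. A i)"
        proof
          fix p assume p: "p \<in> P"
          have "a \<le> p" "p \<le> a + D" using ab p D_def by auto
          then have "\<exists>i<5::nat. a + real i * D / 5 \<le> p \<and> p \<le> a + (real i + 1) * D / 5"
          proof -
            assume *: "a \<le> p" "p \<le> a + D"
            consider "p \<le> a + D/5" | "a + D/5 \<le> p \<and> p \<le> a + 2*D/5" | "a + 2*D/5 \<le> p \<and> p \<le> a + 3*D/5"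
              | "a + 3*D/5 \<le> p \<and> p \<le> a + 4*D/5" | "a + 4*D/5 \<le> p" by linarith
            thus ?thesis
            proof cases
              case 1 thus ?thesis using * by (intro exI[of _ 0]) auto
            next
              case 2 thus ?thesis by (intro exI[of _ 1]) auto
            next
              case 3 thus ?thesis by (intro exI[of _ 2]) auto
            next
              case 4 thus ?thesis by (intro exI[of _ 3]) auto
            next
              case 5 thus ?thesis using * by (intro exI[of _ 4]) auto
            qed
          qed
          thus "p \<in> (\<Union>i<5. A i)" using p unfolding A_def by auto
        qed
      qed (auto simp: A_def)
      have cardA: "card (A i) \<le> 5^m" if i: "i < 5" for i
      proof -
        have AP: "A i \<subseteq> P" unfolding A_def by auto
        have diamA: "\<bar>x - y\<bar> \<le> D/5" if "x \<in> A i" "y \<in> A i" for x y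
          using that unfolding A_def by (auto simp: field_simps abs_if)
        have "\<forall>p\<in>A i. finite (SC (A i) p) \<and> card (SC (A i) p) \<le> m"
        proof
          fix p assume pA: "p \<in> A i"
          hence pP: "p \<in> P" using AP by auto
          have finP: "finite (SC P p)" using h pP by auto
          obtain q where q: "q \<in> P" "D/2 \<le> \<bar>q - p\<bar>"
          proof (cases "D/2 \<le> p - a")
            case True
            hence "D/2 \<le> \<bar>a - p\<bar>" by linarith
            thus ?thesis using that[of a] aP by blast
          next
            case False
            hence "D/2 \<le> \<bar>b - p\<bar>" using D_def by linarith
            thus ?thesis using that[of b] bP by blast
          qed
          have qp: "q \<noteq> p" "0 < \<bar>q - p\<bar>" "\<bar>q - p\<bar> \<le> 1" using q Dpos sub pP abs01[of q P p] by auto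
          then obtain k where k: "(1/2)^(k+1) \<le> \<bar>q - p\<bar> \<and> \<bar>q - p\<bar> \<le> (1/2::real)^k"
            using scale_exists by blast
          have kP: "k \<in> SC P p" unfolding SC_def using k q qp by force
          have kA: "k \<notin> SC (A i) p"
          proof
            assume "k \<in> SC (A i) p"
            then obtain q' where q': "q' \<in> A i" "(1/2)^(k+1) \<le> \<bar>q' - p\<bar>"
              unfolding SC_def by blast
            have "\<bar>q' - p\<bar> \<le> D/5" using diamA q'(1) pA by blast
            hence "(1/2::real)^k \<le> 2 * (D/5)" using q'(2) by simp
            thus False using k q(2) Dpos by linarith
          qed
          have ps: "SC (A i) p \<subset> SC P p" using SC_mono[OF AP] kP kA by blast
          hence "card (SC (A i) p) < card (SC P p)" using finP psubset_card_mono by blast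
          thus "finite (SC (A i) p) \<and> card (SC (A i) p) \<le> m"
            using h pP ps finP finite_subset by fastforce
        qed
        moreover have "finite (A i)" using AP fin finite_subset by blast
        moreover have "A i \<subseteq> {0..1}" using AP sub by blast
        ultimately show ?thesis using Suc.IH by blast
      qed
      have "card P \<le> (\<Sum>i<5. card (A i))"
        using cover card_UN_le[of "{..<5::nat}" A] by simp
      also have "\<dots> \<le> (\<Sum>i<5::nat. 5^m)" by (intro sum_mono cardA) auto
      also have "\<dots> = 5 ^ Suc m" by simp
      finally show ?thesis .
    qed
  qed
qed

lemma SC_W:
  assumes "P \<subseteq> l" "p \<in> P" "\<forall>q\<in>P. q \<noteq> p \<longrightarrow> (1/2)^N < \<bar>q - p\<bar>"
  shows "SC P p \<subseteq> insert 0 (W_at l p \<inter> {1..N})"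
proof
  fix k assume "k \<in> SC P p"
  then obtain q where q: "q \<in> P" "q \<noteq> p" "(1/2)^(k+1) \<le> \<bar>q - p\<bar>" "\<bar>q - p\<bar> \<le> (1/2::real)^k"
    unfolding SC_def by blast
  have "k < N"
  proof (rule ccontr)
    assume "\<not> k < N"
    hence "(1/2::real)^k \<le> (1/2)^N" by (intro power_decreasing) auto
    moreover have "(1/2::real)^N < \<bar>q - p\<bar>" using q assms(3) by blast
    ultimately show False using q(4) by linarith
  qed
  moreover have "k \<in> W_at l p"
  proof -
    have qi: "q - p \<in> (\<lambda>x. x - p) ` l" using q(1) assms(1) by blast
    have "q - p \<in> {(1/2)^(k+1) .. (1/2)^k} \<union> {-((1/2)^k) .. -((1/2)^(k+1))}"
      using q(3,4) by (cases "0 \<le> q - p") auto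
    thus ?thesis unfolding W_at_def W_def using qi by blast
  qed
  ultimately show "k \<in> insert 0 (W_at l p \<inter> {1..N})" by (cases k) auto
qed

lemma cover_lemma:
  assumes "l \<subseteq> {0..1}" "E \<subseteq> l" "\<forall>a\<in>E. card (W_at l a \<inter> {1..N}) \<le> m"
  shows "\<exists>C. finite C \<and> C \<subseteq> E \<and> card C \<le> 5^(m+1) \<and>
           E \<subseteq> (\<Union>c\<in>C. {c - (1/2)^N .. c + (1/2)^N})"
proof -
  define Q where "Q P \<longleftrightarrow> P \<subseteq> E \<and> finite P \<and> (\<forall>p\<in>P. \<forall>q\<in>P. q \<noteq> p \<longrightarrow> (1/2::real)^N < \<bar>q - p\<bar>)" for P
  have bound: "card P \<le> 5^(m+1)" if "Q P" for P
  proof -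
    have PE: "P \<subseteq> E" "finite P" and sep: "\<forall>p\<in>P. \<forall>q\<in>P. q \<noteq> p \<longrightarrow> (1/2::real)^N < \<bar>q - p\<bar>"
      using that unfolding Q_def by auto
    have "\<forall>p\<in>P. finite (SC P p) \<and> card (SC P p) \<le> m + 1"
    proof
      fix p assume p: "p \<in> P"
      have s: "SC P p \<subseteq> insert 0 (W_at l p \<inter> {1..N})"
        using SC_W[of P l p N] PE assms(2) p sep by blast
      have f: "finite (insert 0 (W_at l p \<inter> {1..N}))" by simp
      have "card (insert 0 (W_at l p \<inter> {1..N})) \<le> card (W_at l p \<inter> {1..N}) + 1"
        by (simp add: card_insert_le_m1 card_insert_if)
      also have "\<dots> \<le> m + 1" using assms(3) p PE by auto
      finally show "finite (SC P p) \<and> card (SC P p) \<le> m + 1"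
        using s f by (meson card_mono finite_subset le_trans)
    qed
    moreover have "P \<subseteq> {0..1}" using PE assms by blast
    ultimately show ?thesis using count_lemma PE by blast
  qed
  have "Q {}" unfolding Q_def by auto
  moreover have "\<forall>y. Q y \<longrightarrow> card y < 5 ^ (m + 1) + 1" using bound by (simp add: le_imp_less_Suc)
  ultimately obtain C where C: "Q C" and mx: "\<forall>P. Q P \<longrightarrow> card P \<le> card C"
    using ex_has_greatest_nat[of Q "{}" card "5^(m+1)+1"] by blast
  have "E \<subseteq> (\<Union>c\<in>C. {c - (1/2)^N .. c + (1/2)^N})"
  proof
    fix e assume e: "e \<in> E"
    have "\<exists>c\<in>C. \<bar>e - c\<bar> \<le> (1/2)^N"
    proof (rule ccontr)
      assume n: "\<not> ?thesis"
      hence eC: "e \<notin> C" by force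
      have "Q (insert e C)" using C e n unfolding Q_def by (auto simp: abs_minus_commute)
      hence "card (insert e C) \<le> card C" using mx by blast
      moreover have "card (insert e C) = card C + 1" using eC C unfolding Q_def by simp
      ultimately show False by simp
    qed
    then obtain c where "c \<in> C" "\<bar>e - c\<bar> \<le> (1/2)^N" by blast
    hence "e \<in> {c - (1/2)^N .. c + (1/2)^N}" by (auto simp: abs_le_iff)
    thus "e \<in> (\<Union>c\<in>C. {c - (1/2)^N .. c + (1/2)^N})" using \<open>c \<in> C\<close> by blast
  qed
  thus ?thesis using C bound unfolding Q_def by blast
qed

lemma hg_le:
  assumes g0: "g 0 = 0"
  and h: "\<And>\<delta>. \<delta> > 0 \<Longrightarrow> \<exists>C h. finite C \<and> F \<subseteq> (\<Union>c\<in>C. {c-h..c+h}) \<and> 0 < h \<and> 2*h < \<delta> \<and>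
             of_nat (card C) * ennreal (g (2*h)) \<le> B"
  shows "hausdorff_gauge g F \<le> B"
  unfolding hausdorff_gauge_def
proof (rule SUP_least)
  fix \<delta> :: real assume "\<delta> \<in> {0<..}"
  then obtain C h where C: "finite C" "F \<subseteq> (\<Union>c\<in>C. {c-h..c+h})" "0 < h" "2*h < \<delta>"
      "of_nat (card C) * ennreal (g (2*h)) \<le> B" using h by force
  obtain e where e: "bij_betw e {0..<card C} C" using ex_bij_betw_nat_finite[OF C(1)] by blast
  define U where "U i = (if i < card C then {e i - h .. e i + h} else {})" for i
  have dU: "diameter (U i) = (if i < card C then 2*h else 0)" for i
    unfolding U_def using C(3) by auto
  have "U \<in> {U. F \<subseteq> (\<Union>i. U i) \<and> (\<forall>i. bounded (U i) \<and> diameter (U i) < \<delta>)}"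
  proof -
    have "F \<subseteq> (\<Union>i. U i)"
    proof
      fix x assume "x \<in> F"
      then obtain c where c: "c \<in> C" "x \<in> {c-h..c+h}" using C(2) by blast
      then obtain i where "i < card C" "e i = c" using e unfolding bij_betw_def by force
      thus "x \<in> (\<Union>i. U i)" using c unfolding U_def by auto
    qed
    moreover have "bounded (U i) \<and> diameter (U i) < \<delta>" for i
      using dU C(3,4) \<open>\<delta> \<in> {0<..}\<close> unfolding U_def by auto
    ultimately show ?thesis by blast
  qed
  hence "(INF U\<in>{U :: nat \<Rightarrow> real set. F \<subseteq> (\<Union>i. U i) \<and> (\<forall>i. bounded (U i) \<and> diameter (U i) < \<delta>)}.
        (\<Sum>i. ennreal (g (diameter (U i))))) \<le> (\<Sum>i. ennreal (g (diameter (U i))))"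
    by (rule INF_lower)
  also have "\<dots> = (\<Sum>i<card C. ennreal (g (diameter (U i))))"
    by (rule suminf_finite) (auto simp: dU g0)
  also have "\<dots> = (\<Sum>i<card C. ennreal (g (2*h)))" by (intro sum.cong) (auto simp: dU)
  also have "\<dots> = of_nat (card C) * ennreal (g (2*h))" by simp
  also have "\<dots> \<le> B" by (rule C(5))
  finally show "(INF U\<in>{U :: nat \<Rightarrow> real set. F \<subseteq> (\<Union>i. U i) \<and> (\<forall>i. bounded (U i) \<and> diameter (U i) < \<delta>)}.
        (\<Sum>i. ennreal (g (diameter (U i))))) \<le> B" .
qed

lemma hg_union_zero:
  fixes E :: "nat \<Rightarrow> real set"
  assumes "\<And>M. hausdorff_gauge g (E M) = 0"
  shows "hausdorff_gauge g (\<Union>M. E M) = 0"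
proof -
  define I where "I S \<delta> = (INF U\<in>{U :: nat \<Rightarrow> real set. S \<subseteq> (\<Union>i. U i) \<and> (\<forall>i. bounded (U i) \<and> diameter (U i) < \<delta>)}.
        (\<Sum>i. ennreal (g (diameter (U i)))))" for S \<delta>
  have "hausdorff_gauge g (\<Union>M. E M) \<le> 0"
    unfolding hausdorff_gauge_def I_def[symmetric]
  proof (rule SUP_least)
    fix \<delta> :: real assume d: "\<delta> \<in> {0<..}"
    show "I (\<Union>M. E M) \<delta> \<le> 0"
    proof (rule ennreal_le_epsilon)
      fix \<epsilon> :: real assume eps: "0 < \<epsilon>"
      have "\<forall>M. \<exists>U. E M \<subseteq> (\<Union>i. U i) \<and> (\<forall>i. bounded (U i) \<and> diameter (U i) < \<delta>) \<and>
              (\<Sum>i. ennreal (g (diameter (U i)))) < ennreal (\<epsilon> * (1/2)^Suc M)"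
      proof
        fix M
        have "I (E M) \<delta> \<le> hausdorff_gauge g (E M)"
          unfolding hausdorff_gauge_def I_def using d by (intro SUP_upper) auto
        hence "I (E M) \<delta> < ennreal (\<epsilon> * (1/2)^Suc M)" using assms eps by simp
        thus "\<exists>U. E M \<subseteq> (\<Union>i. U i) \<and> (\<forall>i. bounded (U i) \<and> diameter (U i) < \<delta>) \<and>
              (\<Sum>i. ennreal (g (diameter (U i)))) < ennreal (\<epsilon> * (1/2)^Suc M)"
          unfolding I_def INF_less_iff by blast
      qed
      then obtain UU where UU: "\<And>M. E M \<subseteq> (\<Union>i. UU M i)" "\<And>M i. bounded (UU M i) \<and> diameter (UU M i) < \<delta>"
         "\<And>M. (\<Sum>i. ennreal (g (diameter (UU M i)))) < ennreal (\<epsilon> * (1/2)^Suc M)"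
        by metis
      define V where "V n = UU (fst (prod_decode n)) (snd (prod_decode n))" for n
      have cov: "(\<Union>M. E M) \<subseteq> (\<Union>n. V n)"
      proof
        fix x assume "x \<in> (\<Union>M. E M)"
        then obtain M i where "x \<in> UU M i" using UU(1) by blast
        hence "x \<in> V (prod_encode (M, i))" unfolding V_def by simp
        thus "x \<in> (\<Union>n. V n)" by blast
      qed
      have "I (\<Union>M. E M) \<delta> \<le> (\<Sum>n. ennreal (g (diameter (V n))))"
        unfolding I_def using cov UU(2) unfolding V_def by (intro INF_lower) auto
      also have "\<dots> = (\<Sum>M. (\<Sum>i. ennreal (g (diameter (UU M i)))))"
        unfolding V_def using suminf_ennreal_2dimen[of "\<lambda>M. (\<Sum>i. ennreal (g (diameter (UU M i))))"
            "\<lambda>p. ennreal (g (diameter (UU (fst p) (snd p))))"]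
        by (simp add: case_prod_beta)
      also have "\<dots> \<le> (\<Sum>M. ennreal (\<epsilon> * (1/2)^Suc M))"
        by (intro suminf_le summableI less_imp_le UU(3))
      also have "\<dots> = ennreal (\<Sum>M. \<epsilon> * (1/2)^Suc M)"
        by (rule suminf_ennreal2) (use eps in \<open>auto intro!: summable_mult summable_geometric\<close>)
      also have "(\<Sum>M. \<epsilon> * (1/2::real)^Suc M) = \<epsilon>"
        using sums_mult[OF power_half_series, of \<epsilon>] by (simp add: sums_iff)
      finally show "I (\<Union>M. E M) \<delta> \<le> 0 + ennreal \<epsilon>" by simp
    qed
  qed
  thus ?thesis by simp
qed

lemma small_scale: "\<delta> > 0 \<Longrightarrow> eventually (\<lambda>N. 2 * (1/2::real)^N < \<delta>) sequentially"
proof -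
  assume "\<delta> > 0"
  have "(\<lambda>N::nat. 2 * (1/2::real)^N) \<longlonglongrightarrow> 0" by real_asymp
  thus ?thesis using \<open>\<delta> > 0\<close> by (rule order_tendstoD)
qed

lemma ennreal_bound: "x \<ge> 0 \<Longrightarrow> real n * x \<le> B \<Longrightarrow> of_nat n * ennreal x \<le> ennreal B"
  by (metis ennreal_leI ennreal_mult' ennreal_of_nat_eq_real_of_nat of_nat_0_le_iff)

lemma core_fin:
  fixes F :: "nat \<Rightarrow> real"
  assumes l: "l \<subseteq> {0..1}" and g0: "g 0 = 0"
  and geq: "\<forall>N\<ge>2. g (2*(1/2)^N) = exp (- F N)"
  and Fpos: "\<forall>N\<ge>2. F N \<ge> 0"
  and c0: "\<forall>a\<in>l. \<forall>N. card (W_at l a \<inter> {1..N}) = 0"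
  shows "hausdorff_gauge g l \<le> 5"
proof (rule hg_le[where g=g, OF g0])
  fix \<delta> :: real assume d: "\<delta> > 0"
  obtain N where N: "N \<ge> 2" "2 * (1/2::real)^N < \<delta>"
    using eventually_conj[OF small_scale[OF d] eventually_ge_at_top[of 2]]
    unfolding eventually_sequentially by auto
  obtain C where C: "finite C" "C \<subseteq> l" "card C \<le> 5^(0+1)" "l \<subseteq> (\<Union>c\<in>C. {c - (1/2)^N .. c + (1/2)^N})"
    using cover_lemma[OF l subset_refl, of N 0] c0 by auto
  have "real (card C) * exp (- F N) \<le> 5 * 1"
    using C(3) Fpos N(1) by (intro mult_mono) auto
  hence "of_nat (card C) * ennreal (g (2 * (1/2)^N)) \<le> ennreal 5"
    using geq N(1) by (intro ennreal_bound) auto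
  thus "\<exists>C h. finite C \<and> l \<subseteq> (\<Union>c\<in>C. {c - h..c + h}) \<and> 0 < h \<and> 2 * h < \<delta> \<and>
             of_nat (card C) * ennreal (g (2 * h)) \<le> 5"
    using C N by (intro exI[of _ C] exI[of _ "(1/2)^N"]) auto
qed

lemma core_zero:
  fixes F :: "nat \<Rightarrow> real"
  assumes l: "l \<subseteq> {0..1}" and g0: "g 0 = 0"
  and geq: "\<forall>N\<ge>2. g (2*(1/2)^N) = exp (- F N)"
  and Flim: "filterlim F at_top sequentially"
  and o: "\<forall>a\<in>l. (\<lambda>N. real (card (W_at l a \<inter> {1..N}))) \<in> o(F)"
  shows "hausdorff_gauge g l = 0"
proof -
  define L where "L = 2 * ln (5::real)"
  have Lpos: "L > 0" unfolding L_def by simp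
  define E where "E M = {a\<in>l. \<forall>N\<ge>M. real (card (W_at l a \<inter> {1..N})) \<le> F N / L}" for M
  have Fev: "eventually (\<lambda>N. Z \<le> F N) sequentially" for Z
    using Flim unfolding filterlim_at_top by blast
  have lE: "l = (\<Union>M. E M)"
  proof
    show "l \<subseteq> (\<Union>M. E M)"
    proof
      fix a assume a: "a \<in> l"
      have e1: "eventually (\<lambda>N. norm (real (card (W_at l a \<inter> {1..N}))) \<le> (1/L) * norm (F N)) sequentially"
        using landau_o.smallD[OF o[rule_format, OF a], of "1/L"] Lpos by simp
      have "eventually (\<lambda>N. real (card (W_at l a \<inter> {1..N})) \<le> F N / L) sequentially"
        using eventually_conj[OF e1 Fev[of 0]] by (rule eventually_mono) auto
      then obtain M where "\<forall>N\<ge>M. real (card (W_at l a \<inter> {1..N})) \<le> F N / L"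
        unfolding eventually_sequentially by blast
      thus "a \<in> (\<Union>M. E M)" using a unfolding E_def by blast
    qed
  qed (auto simp: E_def)
  have "hausdorff_gauge g (E M) = 0" for M
  proof -
    have "hausdorff_gauge g (E M) \<le> 0"
    proof (rule ennreal_le_epsilon)
      fix \<eta> :: real assume eta: "0 < \<eta>"
      show "hausdorff_gauge g (E M) \<le> 0 + ennreal \<eta>"
        unfolding add_0
      proof (rule hg_le[where g=g, OF g0])
        fix \<delta> :: real assume d: "\<delta> > 0"
        have "eventually (\<lambda>N. 2 * (1/2::real)^N < \<delta> \<and> N \<ge> max 2 M \<and> max 0 (2 * ln (5/\<eta>)) \<le> F N) sequentially"
          using eventually_conj[OF small_scale[OF d] eventually_conj[OF eventually_ge_at_top[of "max 2 M"] Fev[of "max 0 (2 * ln (5/\<eta>))"]]]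
          by simp
        then obtain N where N: "2 * (1/2::real)^N < \<delta>" "N \<ge> 2" "N \<ge> M" "0 \<le> F N" "2 * ln (5/\<eta>) \<le> F N"
          unfolding eventually_sequentially by auto
        define m where "m = nat \<lfloor>F N / L\<rfloor>"
        have mle: "real m \<le> F N / L" unfolding m_def using N(4) Lpos by simp
        have cm: "\<forall>a\<in>E M. card (W_at l a \<inter> {1..N}) \<le> m"
        proof
          fix a assume "a \<in> E M"
          hence "real (card (W_at l a \<inter> {1..N})) \<le> F N / L" unfolding E_def using N(3) by blast
          thus "card (W_at l a \<inter> {1..N}) \<le> m" unfolding m_def by (simp add: le_nat_floor)
        qed
        obtain C where C: "finite C" "C \<subseteq> E M" "card C \<le> 5^(m+1)" "E M \<subseteq> (\<Union>c\<in>C. {c - (1/2)^N .. c + (1/2)^N})"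
          using cover_lemma[OF l _ cm] unfolding E_def by auto
        have "real (card C) * exp (- F N) \<le> 5^(m+1) * exp (- F N)"
        proof -
          have "real (card C) \<le> real (5^(m+1))" using C(3) by (simp only: of_nat_le_iff)
          thus ?thesis by (intro mult_right_mono) auto
        qed
        also have "(5::real)^(m+1) = 5 * exp (real m * ln 5)"
          by (simp add: exp_of_nat_mult)
        also have "exp (real m * ln 5) \<le> exp (F N / 2)"
          using mle Lpos unfolding L_def by (simp add: field_simps)
        hence "5 * exp (real m * ln 5) * exp (- F N) \<le> 5 * exp (F N / 2) * exp (- F N)" by simp
        also have "5 * exp (F N / 2) * exp (- F N) = 5 * exp (- (F N / 2))"
          by (simp add: mult.assoc exp_add[symmetric])
        also have "\<dots> \<le> 5 * exp (- ln (5/\<eta>))" using N(5) by simp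
        also have "\<dots> = \<eta>" using eta by (simp add: exp_minus)
        finally have "real (card C) * exp (- F N) \<le> \<eta>" .
        hence "of_nat (card C) * ennreal (g (2 * (1/2)^N)) \<le> ennreal \<eta>"
          using geq N(2) by (intro ennreal_bound) auto
        thus "\<exists>C h. finite C \<and> E M \<subseteq> (\<Union>c\<in>C. {c - h..c + h}) \<and> 0 < h \<and> 2 * h < \<delta> \<and>
             of_nat (card C) * ennreal (g (2 * h)) \<le> ennreal \<eta>"
          using C N by (intro exI[of _ C] exI[of _ "(1/2)^N"]) auto
      qed
    qed
    thus ?thesis by simp
  qed
  thus ?thesis using hg_union_zero lE by metis
qed

lemma x_facts:
  assumes "N \<ge> (2::nat)"
  shows "2 * (1/2::real)^N \<in> {0<..<1}" "ln (2 * (1/2::real)^N) = (1 - real N) * ln 2"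
proof -
  have "(1/2::real)^N \<le> (1/2)^2" by (rule power_decreasing) (use assms in auto)
  hence h: "(1/2::real)^N \<le> 1/4" by (simp add: power2_eq_square)
  have "0 < (1/2::real)^N" by simp
  thus "2 * (1/2::real)^N \<in> {0<..<1}" using h by auto
  show "ln (2 * (1/2::real)^N) = (1 - real N) * ln 2"
    by (simp add: ln_mult ln_realpow ln_div algebra_simps)
qed

lemma gen_fin:
  fixes F :: "nat \<Rightarrow> real"
  assumes l: "l \<subseteq> {0..1}" and g0: "g 0 = 0"
  and geq: "\<forall>N\<ge>2. g (2*(1/2)^N) = exp (- F N)"
  and Fpos: "\<forall>N. F N \<ge> 0"
  and o: "\<forall>a\<in>l. (\<lambda>N. real (card (W_at l a \<inter> {1..N}))) \<in> o(F)"
  shows "hausdorff_gauge g l < \<infinity>"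
proof (cases "\<exists>a\<in>l. \<exists>N0. card (W_at l a \<inter> {1..N0}) \<noteq> 0")
  case True
  then obtain a N0 where a: "a \<in> l" "card (W_at l a \<inter> {1..N0}) \<noteq> 0" by blast
  have "filterlim F at_top sequentially"
    unfolding filterlim_at_top
  proof
    fix Z :: real
    define Y where "Y = max Z 1"
    have e1: "eventually (\<lambda>N. norm (real (card (W_at l a \<inter> {1..N}))) \<le> (1/Y) * norm (F N)) sequentially"
      using landau_o.smallD[OF o[rule_format, OF a(1)], of "1/Y"] unfolding Y_def by simp
    have e2: "eventually (\<lambda>N. N \<ge> N0) sequentially" by (rule eventually_ge_at_top)
    show "eventually (\<lambda>N. Z \<le> F N) sequentially"
      using eventually_conj[OF e1 e2]
    proof (rule eventually_mono)
      fix N assume N: "norm (real (card (W_at l a \<inter> {1..N}))) \<le> (1/Y) * norm (F N) \<and> N0 \<le> N"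
      have "card (W_at l a \<inter> {1..N0}) \<le> card (W_at l a \<inter> {1..N})"
        using N by (intro card_mono) auto
      hence "1 \<le> real (card (W_at l a \<inter> {1..N}))" using a(2) by linarith
      hence "1 \<le> (1/Y) * F N" using N Fpos by simp
      hence "Y \<le> F N" unfolding Y_def by (simp add: field_simps)
      thus "Z \<le> F N" unfolding Y_def by simp
    qed
  qed
  hence "hausdorff_gauge g l = 0" using core_zero[OF l g0 geq _ o] by blast
  thus ?thesis by simp
next
  case False
  hence "hausdorff_gauge g l \<le> 5" using core_fin[OF l g0 geq] Fpos by blast
  thus ?thesis using le_less_trans by fastforce
qed


theorem proposition4p3:
  fixes l :: "real set"
  assumes "compact l" and "l \<subseteq> {0..1}"
  shows
    "(\<forall>(f :: real \<Rightarrow> real) (g :: real \<Rightarrow> real).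
        (\<forall>x\<ge>0. f x \<ge> 0) \<longrightarrow>
        (\<forall>a\<in>l. (\<lambda>N::nat. real (card (W_at l a \<inter> {1..N}))) \<in> o(\<lambda>N. f (real N))) \<longrightarrow>
        (\<forall>x\<in>{0<..<1}. g x = exp (- f (1 - ln x / ln 2))) \<longrightarrow> g 0 = 0 \<longrightarrow>
        hausdorff_gauge g l < \<infinity>)
   \<and> (\<forall>(\<sigma> :: real) (g :: real \<Rightarrow> real).
        0 < \<sigma> \<longrightarrow> \<sigma> < 1 \<longrightarrow>
        (\<forall>a\<in>l. (\<lambda>N::nat. real (card (W_at l a \<inter> {1..N}))) \<in> o(\<lambda>N. real N powr \<sigma>)) \<longrightarrow>
        (\<forall>x\<in>{0<..<1}. g x = exp (- ((- ln x) powr \<sigma>))) \<longrightarrow> g 0 = 0 \<longrightarrow>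
        hausdorff_gauge g l < \<infinity>)
   \<and> ((\<forall>a\<in>l. (\<lambda>N::nat. real (card (W_at l a \<inter> {1..N}))) \<in> o(\<lambda>N. real N)) \<longrightarrow>
        hausdorff_dim l = 0)"
proof (intro conjI allI impI)
  note l = assms(2)
  fix f g :: "real \<Rightarrow> real"
  assume fpos: "\<forall>x\<ge>0. f x \<ge> 0"
    and o: "\<forall>a\<in>l. (\<lambda>N::nat. real (card (W_at l a \<inter> {1..N}))) \<in> o(\<lambda>N. f (real N))"
    and gd: "\<forall>x\<in>{0<..<1}. g x = exp (- f (1 - ln x / ln 2))" and g0: "g 0 = 0"
  have geq: "\<forall>N\<ge>2. g (2*(1/2)^N) = exp (- f (real N))"
  proof (intro allI impI)
    fix N :: nat assume N: "N \<ge> 2"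
    have "1 - ln (2*(1/2::real)^N) / ln 2 = real N" using x_facts(2)[OF N] by simp
    thus "g (2*(1/2)^N) = exp (- f (real N))" using gd x_facts(1)[OF N] by metis
  qed
  show "hausdorff_gauge g l < \<infinity>"
    by (rule gen_fin[OF l g0 geq _ o]) (use fpos in auto)
next
  note l = assms(2)
  fix \<sigma> :: real and g :: "real \<Rightarrow> real"
  assume s: "0 < \<sigma>" "\<sigma> < 1"
    and o: "\<forall>a\<in>l. (\<lambda>N::nat. real (card (W_at l a \<inter> {1..N}))) \<in> o(\<lambda>N. real N powr \<sigma>)"
    and gd: "\<forall>x\<in>{0<..<1}. g x = exp (- ((- ln x) powr \<sigma>))" and g0: "g 0 = 0"
  define F where "F N = ((real N - 1) * ln 2) powr \<sigma>" for N :: nat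
  have geq: "\<forall>N\<ge>2. g (2*(1/2)^N) = exp (- F N)"
  proof (intro allI impI)
    fix N :: nat assume N: "N \<ge> 2"
    have "- ln (2*(1/2::real)^N) = (real N - 1) * ln 2" using x_facts(2)[OF N] by (simp add: algebra_simps)
    thus "g (2*(1/2)^N) = exp (- F N)" using gd x_facts(1)[OF N] unfolding F_def by metis
  qed
  have bo: "(\<lambda>N::nat. real N powr \<sigma>) \<in> O(F)" unfolding F_def using s by real_asymp
  have o': "\<forall>a\<in>l. (\<lambda>N::nat. real (card (W_at l a \<inter> {1..N}))) \<in> o(F)"
    using o bo landau_o.small_big_trans by blast
  show "hausdorff_gauge g l < \<infinity>"
    by (rule gen_fin[OF l g0 geq _ o']) (auto simp: F_def)
next
  note l = assms(2)
  assume o: "\<forall>a\<in>l. (\<lambda>N::nat. real (card (W_at l a \<inter> {1..N}))) \<in> o(\<lambda>N. real N)"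
  have H0: "hausdorff_gauge (\<lambda>x. x powr s) l = 0" if s: "s > 0" for s :: real
  proof -
    define F where "F N = s * (real N - 1) * ln 2" for N :: nat
    have geq: "\<forall>N\<ge>2. (2*(1/2)^N) powr s = exp (- F N)"
    proof (intro allI impI)
      fix N :: nat assume N: "N \<ge> 2"
      have "(2*(1/2::real)^N) powr s = exp (s * ln (2*(1/2::real)^N))"
        using x_facts(1)[OF N] by (simp add: powr_def)
      also have "\<dots> = exp (- F N)" unfolding x_facts(2)[OF N] F_def by (simp add: algebra_simps)
      finally show "(2*(1/2)^N) powr s = exp (- F N)" .
    qed
    have lim: "filterlim F at_top sequentially" unfolding F_def using s by real_asymp
    have bo: "(\<lambda>N::nat. real N) \<in> O(F)" unfolding F_def using s by real_asymp
    have o': "\<forall>a\<in>l. (\<lambda>N::nat. real (card (W_at l a \<inter> {1..N}))) \<in> o(F)"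
      using o bo landau_o.small_big_trans by blast
    show ?thesis by (rule core_zero[OF l _ geq lim o']) simp
  qed
  define X where "X = {s. s \<ge> 0 \<and> hausdorff_gauge (\<lambda>x. x powr s) l = 0}"
  have X1: "t \<in> X" if "t > 0" for t unfolding X_def using H0 that by auto
  have bdd: "bdd_below X" unfolding X_def by (rule bdd_belowI[of _ 0]) auto
  have ne: "X \<noteq> {}" using X1[of 1] by (metis empty_iff zero_less_one)
  have ge: "0 \<le> Inf X" by (rule cInf_greatest[OF ne]) (auto simp: X_def)
  have le: "Inf X \<le> t" if "t > 0" for t using cInf_lower[OF X1[OF that] bdd] .
  have "Inf X = 0"
  proof (rule ccontr)
    assume "Inf X \<noteq> 0"
    hence "Inf X > 0" using ge by simp
    hence "Inf X \<le> Inf X / 2" using le[of "Inf X / 2"] by simp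
    thus False using \<open>Inf X > 0\<close> by simp
  qed
  thus "hausdorff_dim l = 0" unfolding hausdorff_dim_def X_def .
qed
end
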